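(* Let $X \in \Lambda^2_{14} = \mathfrak{g}_2$ and let $u, v, y \in \mathbb{R}^7$ be mutually orthogonal. Then $$ X(u \times y, v \times y) = |y|^2 X(u,v) + X(y, (u \times v) \times y). $$
   Context: Equip $\mathbb{R}^7$ with its standard inner product and basis. Let $\varphi = e_{123} - e_{167} - e_{527} - e_{563} - e_{415} - e_{426} - e_{437}$ ($e_{ijk} = e_i\wedge e_j \wedge e_k$) and define the cross product by $\langle u\times v, w\rangle = \varphi(u,v,w)$. A skew bilinear form $X$ is identified with the operator $X$ given by $X(u,v) = \langle X(u),v\rangle$. $\Lambda^2_{14} = \mathfrak{g}_2$ is the set of skew bilinear forms $X$ on $\mathbb{R}^7$ such that $X(v\times w) = X(v)\times w + v \times X(w)$ for all $v,w$ (equivalently $X(u, v\times w) + X(v, w\times u) + X(w, u \times v) = 0$ for all $u,v,w$). *)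

theory Defs
  imports "HOL-Analysis.Analysis"
begin

text \<open>R^7 is modelled as real^7. The standard basis vector e_i (i = 1..7) is
  axis (of_nat i) 1, i.e. the i-th coordinate is indexed by of_nat i :: 7
  (so e_7 sits at the index 0 of the type 7; this is just a labelling).\<close>

definition cmp :: "real^7 \<Rightarrow> nat \<Rightarrow> real" where
  "cmp u i = u $ (of_nat i :: 7)"

text \<open>e_{ijk} = e_i \<and> e_j \<and> e_k evaluated on (u,v,w): the 3x3 determinant.\<close>
definition wedge3 :: "nat \<Rightarrow> nat \<Rightarrow> nat \<Rightarrow> real^7 \<Rightarrow> real^7 \<Rightarrow> real^7 \<Rightarrow> real" where
  "wedge3 i j k u v w =
     cmp u i * (cmp v j * cmp w k - cmp v k * cmp w j)
   - cmp u j * (cmp v i * cmp w k - cmp v k * cmp w i)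
   + cmp u k * (cmp v i * cmp w j - cmp v j * cmp w i)"

definition phi :: "real^7 \<Rightarrow> real^7 \<Rightarrow> real^7 \<Rightarrow> real" where
  "phi u v w = wedge3 1 2 3 u v w - wedge3 1 6 7 u v w - wedge3 5 2 7 u v w
             - wedge3 5 6 3 u v w - wedge3 4 1 5 u v w - wedge3 4 2 6 u v w
             - wedge3 4 3 7 u v w"

definition cross7 :: "real^7 \<Rightarrow> real^7 \<Rightarrow> real^7" where
  "cross7 u v = (\<chi> k. phi u v (axis k 1))"

text \<open>A skew bilinear form is represented by a skew-symmetric matrix A (the operator X),
  with X(u,v) = <X(u), v> = <A u, v>.\<close>
definition skew :: "real^7^7 \<Rightarrow> bool" where
  "skew A \<longleftrightarrow> transpose A = - A"

definition bform :: "real^7^7 \<Rightarrow> real^7 \<Rightarrow> real^7 \<Rightarrow> real" where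
  "bform A u v = (A *v u) \<bullet> v"

definition g2 :: "real^7^7 \<Rightarrow> bool" where
  "g2 A \<longleftrightarrow> skew A \<and>
     (\<forall>v w. A *v (cross7 v w) = cross7 (A *v v) w + cross7 v (A *v w))"

end

theory Submission
  imports Defs
begin

lemma exhaust_7:
  fixes x :: 7
  shows "x = 1 \<or> x = 2 \<or> x = 3 \<or> x = 4 \<or> x = 5 \<or> x = 6 \<or> x = 7"
proof (induct x)
  case (of_int z)
  then have "0 \<le> z" "z < 7" by auto
  then have "z = 0 \<or> z = 1 \<or> z = 2 \<or> z = 3 \<or> z = 4 \<or> z = 5 \<or> z = 6" by linarith
  then show ?case by (elim disjE) simp_all
qed

lemma UNIV_7: "UNIV = {1, 2, 3, 4, 5, 6, 7::7}"
proof (rule set_eqI)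
  fix x :: 7 show "x \<in> UNIV \<longleftrightarrow> x \<in> {1, 2, 3, 4, 5, 6, 7}"
    using exhaust_7[of x] by (simp only: insert_iff empty_iff UNIV_I simp_thms)
qed
lemma neq7: "(1::7) \<noteq> 2" "(1::7) \<noteq> 3" "(1::7) \<noteq> 4" "(1::7) \<noteq> 5" "(1::7) \<noteq> 6" "(1::7) \<noteq> 7" "(2::7) \<noteq> 1" "(2::7) \<noteq> 3" "(2::7) \<noteq> 4" "(2::7) \<noteq> 5" "(2::7) \<noteq> 6" "(2::7) \<noteq> 7" "(3::7) \<noteq> 1" "(3::7) \<noteq> 2" "(3::7) \<noteq> 4" "(3::7) \<noteq> 5" "(3::7) \<noteq> 6" "(3::7) \<noteq> 7" "(4::7) \<noteq> 1" "(4::7) \<noteq> 2" "(4::7) \<noteq> 3" "(4::7) \<noteq> 5" "(4::7) \<noteq> 6" "(4::7) \<noteq> 7" "(5::7) \<noteq> 1" "(5::7) \<noteq> 2" "(5::7) \<noteq> 3" "(5::7) \<noteq> 4" "(5::7) \<noteq> 6" "(5::7) \<noteq> 7" "(6::7) \<noteq> 1" "(6::7) \<noteq> 2" "(6::7) \<noteq> 3" "(6::7) \<noteq> 4" "(6::7) \<noteq> 5" "(6::7) \<noteq> 7" "(7::7) \<noteq> 1" "(7::7) \<noteq> 2" "(7::7) \<noteq> 3" "(7::7) \<noteq> 4" "(7::7) \<noteq> 5" "(7::7) \<noteq> 6"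
  by simp_all

lemma axis7: "axis (i::7) (1::real) $ j = (if j = i then 1 else 0)"
  by (simp add: axis_def)

lemma inner7: "x \<bullet> (y::real^7) = x$1*y$1 + x$2*y$2 + x$3*y$3 + x$4*y$4 + x$5*y$5 + x$6*y$6 + x$7*y$7"
  apply (simp only: inner_vec_def UNIV_7 sum.insert finite.intros finite_insert finite.emptyI insert_iff empty_iff neq7 simp_thms sum.empty inner_real_def not_False_eq_True)
  done
lemma phi_expl: "phi u v w = (u$1 * (v$2 * w$3 - v$3 * w$2) - u$2 * (v$1 * w$3 - v$3 * w$1) + u$3 * (v$1 * w$2 - v$2 * w$1)) - (u$1 * (v$6 * w$7 - v$7 * w$6) - u$6 * (v$1 * w$7 - v$7 * w$1) + u$7 * (v$1 * w$6 - v$6 * w$1)) - (u$5 * (v$2 * w$7 - v$7 * w$2) - u$2 * (v$5 * w$7 - v$7 * w$5) + u$7 * (v$5 * w$2 - v$2 * w$5)) - (u$5 * (v$6 * w$3 - v$3 * w$6) - u$6 * (v$5 * w$3 - v$3 * w$5) + u$3 * (v$5 * w$6 - v$6 * w$5)) - (u$4 * (v$1 * w$5 - v$5 * w$1) - u$1 * (v$4 * w$5 - v$5 * w$4) + u$5 * (v$4 * w$1 - v$1 * w$4)) - (u$4 * (v$2 * w$6 - v$6 * w$2) - u$2 * (v$4 * w$6 - v$6 * w$4) + u$6 * (v$4 * w$2 - v$2 * w$4)) - (u$4 * (v$3 * w$7 - v$7 * w$3) - u$3 * (v$4 * w$7 - v$7 * w$4) + u$7 * (v$4 * w$3 - v$3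 * w$4))"
  by (simp only: phi_def wedge3_def cmp_def of_nat_numeral of_nat_1)

lemma crossc1: "cross7 u v $ 1 = u$2 * v$3 - u$3 * v$2 - u$6 * v$7 + u$7 * v$6 + u$4 * v$5 - u$5 * v$4"
  by (simp only: cross7_def vec_lambda_beta phi_expl axis7 neq7 if_True if_False refl simp_thms mult_zero_right mult_zero_left mult_1_right mult_1_left diff_zero diff_0_right; algebra)

lemma crossc2: "cross7 u v $ 2 = - u$1 * v$3 + u$3 * v$1 + u$5 * v$7 - u$7 * v$5 + u$4 * v$6 - u$6 * v$4"
  by (simp only: cross7_def vec_lambda_beta phi_expl axis7 neq7 if_True if_False refl simp_thms mult_zero_right mult_zero_left mult_1_right mult_1_left diff_zero diff_0_right; algebra)

lemma crossc3: "cross7 u v $ 3 = u$1 * v$2 - u$2 * v$1 - u$5 * v$6 + u$6 * v$5 + u$4 * v$7 - u$7 * v$4"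
  by (simp only: cross7_def vec_lambda_beta phi_expl axis7 neq7 if_True if_False refl simp_thms mult_zero_right mult_zero_left mult_1_right mult_1_left diff_zero diff_0_right; algebra)

lemma crossc4: "cross7 u v $ 4 = - u$1 * v$5 + u$5 * v$1 - u$2 * v$6 + u$6 * v$2 - u$3 * v$7 + u$7 * v$3"
  by (simp only: cross7_def vec_lambda_beta phi_expl axis7 neq7 if_True if_False refl simp_thms mult_zero_right mult_zero_left mult_1_right mult_1_left diff_zero diff_0_right; algebra)

lemma crossc5: "cross7 u v $ 5 = - u$2 * v$7 + u$7 * v$2 - u$6 * v$3 + u$3 * v$6 - u$4 * v$1 + u$1 * v$4"
  by (simp only: cross7_def vec_lambda_beta phi_expl axis7 neq7 if_True if_False refl simp_thms mult_zero_right mult_zero_left mult_1_right mult_1_left diff_zero diff_0_right; algebra)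

lemma crossc6: "cross7 u v $ 6 = u$1 * v$7 - u$7 * v$1 + u$5 * v$3 - u$3 * v$5 - u$4 * v$2 + u$2 * v$4"
  by (simp only: cross7_def vec_lambda_beta phi_expl axis7 neq7 if_True if_False refl simp_thms mult_zero_right mult_zero_left mult_1_right mult_1_left diff_zero diff_0_right; algebra)

lemma crossc7: "cross7 u v $ 7 = - u$1 * v$6 + u$6 * v$1 - u$5 * v$2 + u$2 * v$5 - u$4 * v$3 + u$3 * v$4"
  by (simp only: cross7_def vec_lambda_beta phi_expl axis7 neq7 if_True if_False refl simp_thms mult_zero_right mult_zero_left mult_1_right mult_1_left diff_zero diff_0_right; algebra)

lemmas cross_simps = crossc1 crossc2 crossc3 crossc4 crossc5 crossc6 crossc7

lemma P1: "(cross7 a y) \<bullet> (cross7 b y) = (y \<bullet> y) * (a \<bullet> b) - (a \<bullet> y) * (b \<bullet> y)"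
  apply (simp only: inner7 cross_simps)
  apply algebra
  done

lemma P2: "(cross7 u w) \<bullet> (cross7 v y) = w \<bullet> (cross7 (cross7 u v) y)
   - 2 * (u \<bullet> y) * (v \<bullet> w) + (u \<bullet> v) * (y \<bullet> w) + (y \<bullet> v) * (u \<bullet> w)"
  apply (simp only: inner7 cross_simps)
  apply algebra
  done

theorem proposition2p1:
  fixes A :: "real^7^7" and u v y :: "real^7"
  assumes "g2 A"
    and "u \<bullet> v = 0" and "u \<bullet> y = 0" and "v \<bullet> y = 0"
  shows "bform A (cross7 u y) (cross7 v y)
         = (norm y)\<^sup>2 * bform A u v + bform A y (cross7 (cross7 u v) y)"
proof -
  have d: "A *v (cross7 u y) = cross7 (A *v u) y + cross7 u (A *v y)"
    using assms(1) unfolding g2_def by blast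
  have "bform A (cross7 u y) (cross7 v y)
      = cross7 (A *v u) y \<bullet> cross7 v y + cross7 u (A *v y) \<bullet> cross7 v y"
    unfolding bform_def d by (simp only: inner_add_left)
  also have "cross7 (A *v u) y \<bullet> cross7 v y = (y \<bullet> y) * bform A u v"
    unfolding P1 bform_def using assms(4) by (simp add: inner_commute)
  also have "cross7 u (A *v y) \<bullet> cross7 v y = bform A y (cross7 (cross7 u v) y)"
    unfolding P2 bform_def using assms(2,3,4) by (simp add: inner_commute)
  finally show ?thesis by (simp add: power2_norm_eq_inner)
qed

end
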